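(* For every $i\in\{0,\ldots,k-n\}$, the cone $C_i\subseteq\mathcal{F}_{n+1,2d}$ is closed (with respect to the Euclidean topology on the finite-dimensional real vector space $\mathcal{F}_{n+1,2d}$).
   Context: Let $n,d\geq 1$ be integers. $\mathcal{F}_{n+1,l}$ denotes the real vector space of real forms (homogeneous polynomials) of degree $l$ in the variables $X=(X_0,\ldots,X_n)$. Let $k=k(n,d):=\binom{n+d}{n}-1$, so $\dim\mathcal{F}_{n+1,d}=k+1$. Order the set $I_{n+1,d}:=\{\alpha\in\mathbb{N}_0^{n+1}: |\alpha|=d\}$ lexicographically in decreasing order as $\alpha_0,\ldots,\alpha_k$ (so $\alpha_0=(d,0,\ldots,0)$ and $\alpha_k=(0,\ldots,0,d)$), and set $m_j(X):=X^{\alpha_j}$ for $j=0,\ldots,k$. For a real symmetric matrix $A\in\mathrm{Sym}_{k+1}(\mathbb{R})$ let $q_A(Z):=ZAZ^t$ be the associated quadratic form in $Z=(Z_0,\ldots,Z_k)$, and let the Gram map $\mathcal{G}:\mathrm{Sym}_{k+1}(\mathbb{R})\to\mathcal{F}_{n+1,2d}$ be $\mathcal{G}(A):=q_A(m_0(X),\ldots,m_k(X))$. For $i\in\{0,\ldots,k-n\}$ let $H_i:=\{[z]\in\mathbb{P}^k(\mathbb{C}) : \exists x\in\mathbb{C}^{n+1}\text{ with }(z_0,\ldots,z_{n+i})=(m_0(x),\ldots,m_{n+i}(x))\}$, let $V_i$ be the Zariski closure of $H_i$ in $\mathbb{P}^k$, and let $V_i(\mathbb{R})$ denote its set of real points.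 Define the convex cone $C_i:=\{f\in\mathcal{F}_{n+1,2d} : \exists A\in\mathcal{G}^{-1}(f)\text{ such that } q_A(z)\geq 0 \text{ for all } [z]\in V_i(\mathbb{R})\}$ (the sign of $q_A(z)$ is independent of the representative $z$). *)

theory Defs
  imports "HOL-Analysis.Analysis" "HOL-Library.List_Lexorder"
begin

definition Iexp :: "nat \<Rightarrow> nat \<Rightarrow> nat list set" where
  "Iexp m e = {\<alpha>. length \<alpha> = m \<and> sum_list \<alpha> = e}"

definition kk :: "nat \<Rightarrow> nat \<Rightarrow> nat" where
  "kk n d = (n + d choose n) - 1"

definition alph :: "nat \<Rightarrow> nat \<Rightarrow> nat \<Rightarrow> nat list" where
  "alph n d j = rev (sorted_list_of_set (Iexp (Suc n) d)) ! j"

definition monom_eval :: "nat list \<Rightarrow> (nat \<Rightarrow> 'a::comm_semiring_1) \<Rightarrow> 'a" where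
  "monom_eval \<alpha> x = (\<Prod>i<length \<alpha>. x i ^ (\<alpha> ! i))"

definition mj :: "nat \<Rightarrow> nat \<Rightarrow> nat \<Rightarrow> (nat \<Rightarrow> 'a::comm_semiring_1) \<Rightarrow> 'a" where
  "mj n d j x = monom_eval (alph n d j) x"

text \<open>Real forms of degree l in n+1 variables, as coefficient functions on exponent vectors.\<close>
definition Forms :: "nat \<Rightarrow> nat \<Rightarrow> (nat list \<Rightarrow> real) set" where
  "Forms n l = {f. \<forall>\<beta>. \<beta> \<notin> Iexp (Suc n) l \<longrightarrow> f \<beta> = 0}"

definition SymMat :: "nat \<Rightarrow> (nat \<Rightarrow> nat \<Rightarrow> real) set" where
  "SymMat k = {A. (\<forall>j l. A j l = A l j) \<and> (\<forall>j l. k < j \<or> k < l \<longrightarrow> A j l = 0)}"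

definition qform :: "nat \<Rightarrow> (nat \<Rightarrow> nat \<Rightarrow> 'a::comm_ring_1) \<Rightarrow> (nat \<Rightarrow> 'a) \<Rightarrow> 'a" where
  "qform k A z = (\<Sum>j\<le>k. \<Sum>l\<le>k. z j * A j l * z l)"

text \<open>Gram map: coefficients of q_A(m_0(X),...,m_k(X)).\<close>
definition Gram :: "nat \<Rightarrow> nat \<Rightarrow> (nat \<Rightarrow> nat \<Rightarrow> real) \<Rightarrow> (nat list \<Rightarrow> real)" where
  "Gram n d A = (\<lambda>\<beta>. \<Sum>j\<le>kk n d. \<Sum>l\<le>kk n d.
      (if map2 (+) (alph n d j) (alph n d l) = \<beta> then A j l else 0))"

text \<open>Nonzero vectors in C^{k+1} (representatives of points of P^k).\<close>
definition nonzero_vec :: "nat \<Rightarrow> (nat \<Rightarrow> 'a::zero) \<Rightarrow> bool" where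
  "nonzero_vec k z = (\<exists>j\<le>k. z j \<noteq> 0)"

text \<open>H_i, as the cone of representatives z in C^{k+1} - 0.\<close>
definition Hcone :: "nat \<Rightarrow> nat \<Rightarrow> nat \<Rightarrow> (nat \<Rightarrow> complex) set" where
  "Hcone n d i = {z. nonzero_vec (kk n d) z \<and>
      (\<exists>x::nat \<Rightarrow> complex. \<forall>j\<le>n + i. z j = mj n d j x)}"

definition hpoly_eval :: "nat \<Rightarrow> nat \<Rightarrow> (nat list \<Rightarrow> complex) \<Rightarrow> (nat \<Rightarrow> complex) \<Rightarrow> complex" where
  "hpoly_eval k e c z = (\<Sum>\<beta>\<in>Iexp (Suc k) e. c \<beta> * monom_eval \<beta> z)"

definition zariski_closure :: "nat \<Rightarrow> (nat \<Rightarrow> complex) set \<Rightarrow> (nat \<Rightarrow> complex) set" where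
  "zariski_closure k S = {z. nonzero_vec k z \<and>
      (\<forall>e c. (\<forall>w\<in>S. hpoly_eval k e c w = 0) \<longrightarrow> hpoly_eval k e c z = 0)}"

definition Vcone :: "nat \<Rightarrow> nat \<Rightarrow> nat \<Rightarrow> (nat \<Rightarrow> complex) set" where
  "Vcone n d i = zariski_closure (kk n d) (Hcone n d i)"

definition Vreal :: "nat \<Rightarrow> nat \<Rightarrow> nat \<Rightarrow> (nat \<Rightarrow> real) set" where
  "Vreal n d i = {z. nonzero_vec (kk n d) z \<and> (\<lambda>j. complex_of_real (z j)) \<in> Vcone n d i}"

definition Ccone :: "nat \<Rightarrow> nat \<Rightarrow> nat \<Rightarrow> (nat list \<Rightarrow> real) set" where
  "Ccone n d i = {f \<in> Forms n (2 * d). \<exists>A\<in>SymMat (kk n d). Gram n d A = f \<and>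
      (\<forall>z\<in>Vreal n d i. qform (kk n d) A z \<ge> 0)}"

end

theory Submission
  imports Defs "HOL-Computational_Algebra.Polynomial"
begin


lemma Iexp_finite: "finite (Iexp m e)"
proof -
  have "Iexp m e \<subseteq> {xs. set xs \<subseteq> {..e} \<and> length xs = m}"
    by (auto simp: Iexp_def intro: member_le_sum_list)
  then show ?thesis using finite_lists_length_eq[of "{..e}" m] finite_subset by blast
qed

lemma Iexp_card: "card (Iexp (Suc n) d) = (n + d choose n)"
proof -
  have "card (Iexp (Suc n) d) = (d + Suc n - 1) choose d"
    unfolding Iexp_def using card_length_sum_list[of "Suc n" d] by simp
  also have "\<dots> = (n + d choose n)" using binomial_symmetric[of n "n+d"] by (simp add: add.commute)
  finally show ?thesis .
qed

lemma alph_props: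
  shows "j \<le> kk n d \<Longrightarrow> alph n d j \<in> Iexp (Suc n) d"
    and "inj_on (alph n d) {..kk n d}"
proof -
  define xs where "xs = rev (sorted_list_of_set (Iexp (Suc n) d))"
  have len: "length xs = Suc (kk n d)"
    unfolding xs_def kk_def using Iexp_card[of n d] Iexp_finite
    by (simp add: Suc_diff_1)
  have dist: "distinct xs" unfolding xs_def by simp
  have set: "set xs = Iexp (Suc n) d" unfolding xs_def using Iexp_finite by simp
  show "j \<le> kk n d \<Longrightarrow> alph n d j \<in> Iexp (Suc n) d"
    unfolding alph_def xs_def[symmetric] using len set by (metis less_Suc_eq_le nth_mem)
  show "inj_on (alph n d) {..kk n d}"
    unfolding alph_def xs_def[symmetric] inj_on_def using len dist
    by (simp add: nth_eq_iff_index_eq)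
qed

lemma map2_add_nth: "length a = length b \<Longrightarrow> p < length a \<Longrightarrow> map2 (+) a b ! p = a ! p + b ! p"
  by simp

lemma sum_list_map2: "length a = length b \<Longrightarrow> sum_list (map2 (+) a b) = sum_list a + sum_list (b :: nat list)"
proof (induction a arbitrary: b)
  case Nil then show ?case by simp
next
  case (Cons x a) then show ?case by (cases b) auto
qed

lemma map2_Iexp: "a \<in> Iexp m e1 \<Longrightarrow> b \<in> Iexp m e2 \<Longrightarrow> map2 (+) a b \<in> Iexp m (e1 + e2)"
  by (auto simp: Iexp_def sum_list_map2)

lemma map2_comm: "map2 (+) a b = map2 (+) b (a :: nat list)"
proof (induction a arbitrary: b)
  case Nil then show ?case by simp
next
  case (Cons x a) then show ?case by (cases b) auto
qed

lemma monom_eval_add: "length a = length b \<Longrightarrow>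
   monom_eval (map2 (+) a b) x = monom_eval a x * monom_eval b x"
  unfolding monom_eval_def by (simp add: power_add prod.distrib)

lemma mj_mult: "j \<le> kk n d \<Longrightarrow> l \<le> kk n d \<Longrightarrow>
   mj n d j x * mj n d l x = monom_eval (map2 (+) (alph n d j) (alph n d l)) x"
  unfolding mj_def using alph_props(1)[of j n d] alph_props(1)[of l n d]
  by (simp add: monom_eval_add Iexp_def)

lemma qform_gram:
  fixes x :: "nat \<Rightarrow> 'a::{comm_ring_1, real_algebra_1}"
  shows "qform (kk n d) (\<lambda>j l. of_real (A j l)) (\<lambda>j. mj n d j x) =
    (\<Sum>\<beta>\<in>Iexp (Suc n) (2*d). of_real (Gram n d A \<beta>) * monom_eval \<beta> x)"
proof -
  let ?K = "kk n d"
  have "(\<Sum>\<beta>\<in>Iexp (Suc n) (2*d). of_real (Gram n d A \<beta>) * monom_eval \<beta> x)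
     = (\<Sum>\<beta>\<in>Iexp (Suc n) (2*d). \<Sum>j\<le>?K. \<Sum>l\<le>?K.
          (if map2 (+) (alph n d j) (alph n d l) = \<beta> then of_real (A j l) * monom_eval \<beta> x else 0))"
    unfolding Gram_def of_real_sum sum_distrib_right by (intro sum.cong refl) simp
  also have "\<dots> = (\<Sum>j\<le>?K. \<Sum>l\<le>?K. \<Sum>\<beta>\<in>Iexp (Suc n) (2*d).
          (if map2 (+) (alph n d j) (alph n d l) = \<beta> then of_real (A j l) * monom_eval \<beta> x else 0))"
    by (subst sum.swap, subst (2) sum.swap, rule refl)
  also have "\<dots> = (\<Sum>j\<le>?K. \<Sum>l\<le>?K. of_real (A j l) * monom_eval (map2 (+) (alph n d j) (alph n d l)) x)"
  proof (intro sum.cong refl)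
    fix j l assume "j \<in> {..?K}" "l \<in> {..?K}"
    then have "map2 (+) (alph n d j) (alph n d l) \<in> Iexp (Suc n) (2*d)"
      using map2_Iexp alph_props(1) by (metis atMost_iff mult_2)
    then show "(\<Sum>\<beta>\<in>Iexp (Suc n) (2*d).
          (if map2 (+) (alph n d j) (alph n d l) = \<beta> then of_real (A j l) * monom_eval \<beta> x else 0))
        = of_real (A j l) * monom_eval (map2 (+) (alph n d j) (alph n d l)) x"
      using Iexp_finite by (simp add: sum.delta)
  qed
  also have "\<dots> = qform ?K (\<lambda>j l. of_real (A j l)) (\<lambda>j. mj n d j x)"
    unfolding qform_def
    by (intro sum.cong refl) (simp add: mj_mult[symmetric] mult_ac)
  finally show ?thesis by simp
qed



fun enc :: "nat \<Rightarrow> nat list \<Rightarrow> nat" where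
  "enc D [] = 0"
| "enc D (a # as) = a + D * enc D as"

lemma monom_eval_Cons: "monom_eval (a # as) x = x 0 ^ a * monom_eval as (\<lambda>p. x (Suc p))"
  unfolding monom_eval_def length_Cons prod.lessThan_Suc_shift by simp

lemma monom_eval_enc: "monom_eval as (\<lambda>p. (s::real) ^ (D ^ p)) = s ^ enc D as"
proof (induction as arbitrary: s)
  case Nil then show ?case by (simp add: monom_eval_def)
next
  case (Cons a as)
  have "monom_eval (a # as) (\<lambda>p. s ^ (D ^ p)) = s ^ a * monom_eval as (\<lambda>p. (s ^ D) ^ (D ^ p))"
    by (simp add: monom_eval_Cons power_mult)
  also have "\<dots> = s ^ enc D (a # as)" using Cons by (simp add: power_add power_mult)
  finally show ?case .
qed

lemma enc_inj: "length a = length b \<Longrightarrow> \<forall>v\<in>set a. v < D \<Longrightarrow> \<forall>v\<in>set b. v < D \<Longrightarrow>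
   enc D a = enc D b \<Longrightarrow> a = b"
proof (induction a arbitrary: b)
  case Nil then show ?case by simp
next
  case (Cons x a)
  then obtain y b' where b: "b = y # b'" by (cases b) auto
  have xy: "x < D" "y < D" using Cons.prems b by auto
  have e: "x + D * enc D a = y + D * enc D b'" using Cons.prems b by simp
  have "(x + D * enc D a) mod D = x" "(y + D * enc D b') mod D = y" using xy by auto
  then have "x = y" using e by metis
  moreover have "enc D a = enc D b'" using e xy `x = y` by simp
  ultimately show ?case using Cons b by auto
qed

lemma monomials_indep:
  assumes "\<forall>x::nat \<Rightarrow> real. (\<Sum>l\<le>kk n d. c l * mj n d l x) = 0" "l0 \<le> kk n d"
  shows "c l0 = 0"
proof -
  let ?K = "kk n d" and ?D = "Suc d"
  define e where "e l = enc ?D (alph n d l)" for l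
  have ent: "\<forall>v\<in>set (alph n d l). v < ?D" if "l \<le> ?K" for l
    using alph_props(1)[OF that] by (force simp: Iexp_def less_Suc_eq_le dest: member_le_sum_list)
  have einj: "inj_on e {..?K}"
  proof (rule inj_onI)
    fix a b assume ab: "a \<in> {..?K}" "b \<in> {..?K}" "e a = e b"
    then have "alph n d a = alph n d b"
      using enc_inj[of "alph n d a" "alph n d b" ?D] ent alph_props(1)[of a n d] alph_props(1)[of b n d]
      by (auto simp: e_def Iexp_def)
    then show "a = b" using alph_props(2) ab inj_on_def by metis
  qed
  define p where "p = (\<Sum>l\<le>?K. monom (c l) (e l))"
  have "poly p s = 0" for s
  proof -
    have "poly p s = (\<Sum>l\<le>?K. c l * mj n d l (\<lambda>q. s ^ (?D ^ q)))"
      unfolding p_def poly_sum mj_def e_def by (simp add: poly_monom monom_eval_enc)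
    then show ?thesis using assms(1) by simp
  qed
  then have "p = 0" using poly_all_0_iff_0 by blast
  moreover have "coeff p (e l0) = c l0"
  proof -
    have "coeff p (e l0) = (\<Sum>l\<le>?K. if e l = e l0 then c l else 0)"
      unfolding p_def coeff_sum by (simp add: coeff_monom)
    also have "\<dots> = (\<Sum>l\<le>?K. if l = l0 then c l else 0)"
      using einj assms(2) by (intro sum.cong refl) (auto simp: inj_on_def)
    also have "\<dots> = c l0" using assms(2) by simp
    finally show ?thesis .
  qed
  ultimately show ?thesis by simp
qed



definition uu :: "nat \<Rightarrow> nat \<Rightarrow> nat \<Rightarrow> nat list" where
  "uu K j l = map (\<lambda>p. (if p = j then 1 else 0) + (if p = l then 1 else 0)) [0..<Suc K]"

lemma uu_Iexp: "j \<le> K \<Longrightarrow> l \<le> K \<Longrightarrow> uu K j l \<in> Iexp (Suc K) 2"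
  unfolding uu_def Iexp_def
  by (simp add: sum_list_map_eq_sum_count2 sum_set_upt_conv_sum_list_nat[symmetric] sum.distrib atLeast0LessThan)

lemma monom_uu:
  fixes z :: "nat \<Rightarrow> 'a::comm_semiring_1"
  assumes "j \<le> K" "l \<le> K"
  shows "monom_eval (uu K j l) z = z j * z l"
proof -
  have "monom_eval (uu K j l) z = (\<Prod>p<Suc K. z p ^ ((if p = j then 1 else 0) + (if p = l then 1 else 0)))"
    unfolding uu_def monom_eval_def length_map length_upt diff_zero by (intro prod.cong refl, subst nth_map_upt) auto
  also have "\<dots> = (\<Prod>p<Suc K. (if p = j then z p else 1)) * (\<Prod>p<Suc K. (if p = l then z p else 1))"
  proof -
    have "(\<Prod>p<Suc K. z p ^ ((if p = j then 1 else 0) + (if p = l then 1 else 0)))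
       = (\<Prod>p<Suc K. (if p = j then z p else 1) * (if p = l then z p else 1))"
      by (intro prod.cong refl) (simp add: power_add)
    then show ?thesis by (simp only: prod.distrib)
  qed
  also have "\<dots> = z j * z l" using assms by (simp add: prod.delta)
  finally show ?thesis .
qed

lemma qform_hpoly:
  "\<exists>c. \<forall>z. hpoly_eval K 2 c z = qform K (\<lambda>j l. complex_of_real (Dl j l)) z"
proof -
  define c where "c \<beta> = (\<Sum>j\<le>K. \<Sum>l\<le>K. if uu K j l = \<beta> then complex_of_real (Dl j l) else 0)" for \<beta>
  have "hpoly_eval K 2 c z = qform K (\<lambda>j l. complex_of_real (Dl j l)) z" for z
  proof -
    have "hpoly_eval K 2 c z = (\<Sum>\<beta>\<in>Iexp (Suc K) 2. \<Sum>j\<le>K. \<Sum>l\<le>K.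
        (if uu K j l = \<beta> then complex_of_real (Dl j l) * monom_eval \<beta> z else 0))"
      unfolding hpoly_eval_def c_def sum_distrib_right by (intro sum.cong refl) simp
    also have "\<dots> = (\<Sum>j\<le>K. \<Sum>l\<le>K. \<Sum>\<beta>\<in>Iexp (Suc K) 2.
        (if uu K j l = \<beta> then complex_of_real (Dl j l) * monom_eval \<beta> z else 0))"
      by (subst sum.swap, subst (2) sum.swap, rule refl)
    also have "\<dots> = (\<Sum>j\<le>K. \<Sum>l\<le>K. complex_of_real (Dl j l) * (z j * z l))"
      by (intro sum.cong refl) (simp add: Iexp_finite uu_Iexp monom_uu sum.delta)
    also have "\<dots> = qform K (\<lambda>j l. complex_of_real (Dl j l)) z"
      unfolding qform_def by (intro sum.cong refl) (simp add: mult_ac)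
    finally show ?thesis .
  qed
  then show ?thesis by blast
qed

lemma mj_of_real: "mj n d j (\<lambda>p. complex_of_real (x p)) = complex_of_real (mj n d j x)"
  unfolding mj_def monom_eval_def by (simp add: of_real_prod of_real_power)

lemma qform_of_real: "qform K (\<lambda>j l. complex_of_real (A j l)) (\<lambda>j. complex_of_real (z j))
   = complex_of_real (qform K A z)"
  unfolding qform_def by (simp add: of_real_sum of_real_mult)

lemma zariski_vanish:
  assumes supp: "\<And>j l. Dl j l \<noteq> 0 \<Longrightarrow> j \<le> n + i \<and> l \<le> n + i"
    and gram0: "\<And>\<beta>. Gram n d Dl \<beta> = 0"
    and z: "z \<in> Vreal n d i"
  shows "qform (kk n d) Dl z = 0"
proof -
  let ?K = "kk n d"
  obtain c where c: "\<And>w. hpoly_eval ?K 2 c w = qform ?K (\<lambda>j l. complex_of_real (Dl j l)) w"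
    using qform_hpoly by blast
  have "hpoly_eval ?K 2 c w = 0" if w: "w \<in> Hcone n d i" for w
  proof -
    obtain x where x: "\<forall>j\<le>n+i. w j = mj n d j x" using w unfolding Hcone_def by blast
    have "qform ?K (\<lambda>j l. complex_of_real (Dl j l)) w
        = qform ?K (\<lambda>j l. complex_of_real (Dl j l)) (\<lambda>j. mj n d j x)"
      unfolding qform_def
    proof (intro sum.cong refl)
      fix j l
      show "w j * complex_of_real (Dl j l) * w l = mj n d j x * complex_of_real (Dl j l) * mj n d l x"
        using supp[of j l] x by (cases "Dl j l = 0") auto
    qed
    also have "\<dots> = 0" unfolding qform_gram gram0 by simp
    finally show ?thesis using c by simp
  qed
  then have "hpoly_eval ?K 2 c (\<lambda>j. complex_of_real (z j)) = 0"
    using z unfolding Vreal_def Vcone_def zariski_closure_def by blast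
  then show ?thesis using c qform_of_real by simp
qed

lemma P_in_W:
  fixes x :: "nat \<Rightarrow> real"
  assumes "\<forall>j\<le>n+i. z j = mj n d j x" "nonzero_vec (kk n d) z"
  shows "z \<in> Vreal n d i"
proof -
  have nz: "nonzero_vec (kk n d) (\<lambda>j. complex_of_real (z j))"
    using assms(2) unfolding nonzero_vec_def by auto
  have "(\<lambda>j. complex_of_real (z j)) \<in> Hcone n d i"
    unfolding Hcone_def using nz assms(1) mj_of_real
    by (intro CollectI conjI exI[of _ "\<lambda>p. complex_of_real (x p)"]) auto
  then have "(\<lambda>j. complex_of_real (z j)) \<in> Vcone n d i"
    unfolding Vcone_def zariski_closure_def using nz by blast
  then show ?thesis unfolding Vreal_def using assms(2) by blast
qed



definition JJ :: "nat \<Rightarrow> nat \<Rightarrow> nat \<Rightarrow> nat set" where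
  "JJ n d i = {j. j \<le> kk n d \<and> j \<le> n + i}"

definition Sb :: "nat \<Rightarrow> nat \<Rightarrow> nat \<Rightarrow> nat list \<Rightarrow> (nat \<times> nat) set" where
  "Sb n d i \<beta> = {(a, b). a \<in> JJ n d i \<and> b \<in> JJ n d i \<and> map2 (+) (alph n d a) (alph n d b) = \<beta>}"

definition cls :: "nat \<Rightarrow> nat \<Rightarrow> nat \<Rightarrow> nat \<Rightarrow> nat \<Rightarrow> (nat \<times> nat) set" where
  "cls n d i j l = Sb n d i (map2 (+) (alph n d j) (alph n d l))"

definition Rm :: "nat \<Rightarrow> nat \<Rightarrow> nat \<Rightarrow> (nat \<Rightarrow> nat \<Rightarrow> real) \<Rightarrow> nat \<Rightarrow> nat \<Rightarrow> real" where
  "Rm n d i A j l = (if j \<in> JJ n d i \<and> l \<in> JJ n d i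
     then (\<Sum>p\<in>cls n d i j l. A (fst p) (snd p)) / real (card (cls n d i j l)) else A j l)"

definition Fixd :: "nat \<Rightarrow> nat \<Rightarrow> nat \<Rightarrow> (nat \<Rightarrow> nat \<Rightarrow> real) \<Rightarrow> bool" where
  "Fixd n d i E = (\<forall>j l. j \<in> JJ n d i \<and> l \<in> JJ n d i \<longrightarrow>
     E j l = (\<Sum>p\<in>cls n d i j l. E (fst p) (snd p)) / real (card (cls n d i j l)))"

lemma JJ_finite: "finite (JJ n d i)" unfolding JJ_def by simp

lemma Sb_finite: "finite (Sb n d i \<beta>)"
proof -
  have "Sb n d i \<beta> \<subseteq> JJ n d i \<times> JJ n d i" unfolding Sb_def by auto
  then show ?thesis using JJ_finite finite_subset by blast
qed

lemma cls_mem: "j \<in> JJ n d i \<Longrightarrow> l \<in> JJ n d i \<Longrightarrow> (j, l) \<in> cls n d i j l"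
  unfolding cls_def Sb_def by simp

lemma cls_sym: "cls n d i j l = cls n d i l j"
  unfolding cls_def by (simp add: map2_comm[of "alph n d j"])

lemma Sb_cls: "p \<in> Sb n d i \<beta> \<Longrightarrow> cls n d i (fst p) (snd p) = Sb n d i \<beta>"
  unfolding cls_def Sb_def by auto

lemma Gram_decomp:
  "Gram n d A \<beta> = (\<Sum>p\<in>Sb n d i \<beta>. A (fst p) (snd p))
     + (\<Sum>p\<in>{p\<in>{..kk n d}\<times>{..kk n d}. map2 (+) (alph n d (fst p)) (alph n d (snd p)) = \<beta>} - Sb n d i \<beta>. A (fst p) (snd p))"
proof -
  let ?T = "{p\<in>{..kk n d}\<times>{..kk n d}. map2 (+) (alph n d (fst p)) (alph n d (snd p)) = \<beta>}"
  have "Gram n d A \<beta> = (\<Sum>p\<in>{..kk n d}\<times>{..kk n d}.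
      if map2 (+) (alph n d (fst p)) (alph n d (snd p)) = \<beta> then A (fst p) (snd p) else 0)"
    unfolding Gram_def by (simp add: sum.cartesian_product case_prod_beta)
  also have "\<dots> = (\<Sum>p\<in>?T. A (fst p) (snd p))"
    by (simp add: sum.inter_filter)
  also have "\<dots> = (\<Sum>p\<in>Sb n d i \<beta>. A (fst p) (snd p)) + (\<Sum>p\<in>?T - Sb n d i \<beta>. A (fst p) (snd p))"
  proof -
    have "Sb n d i \<beta> \<subseteq> ?T" unfolding Sb_def JJ_def by auto
    moreover have "finite ?T" by simp
    ultimately show ?thesis by (metis (no_types, lifting) add.commute sum.subset_diff)
  qed
  finally show ?thesis .
qed

lemma Rm_outside: "p \<in> {p\<in>{..kk n d}\<times>{..kk n d}. map2 (+) (alph n d (fst p)) (alph n d (snd p)) = \<beta>} - Sb n d i \<beta>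
   \<Longrightarrow> \<not> (fst p \<in> JJ n d i \<and> snd p \<in> JJ n d i)"
  unfolding Sb_def by auto

lemma sum_Sb_avg:
  assumes "\<And>p. p \<in> Sb n d i \<beta> \<Longrightarrow> X (fst p) (snd p) = (\<Sum>q\<in>Sb n d i \<beta>. A (fst q) (snd q)) / real (card (Sb n d i \<beta>))"
  shows "(\<Sum>p\<in>Sb n d i \<beta>. X (fst p) (snd p)) = (\<Sum>q\<in>Sb n d i \<beta>. A (fst q) (snd q))"
proof (cases "Sb n d i \<beta> = {}")
  case True then show ?thesis by simp
next
  case False
  then have "card (Sb n d i \<beta>) > 0" using Sb_finite card_gt_0_iff by blast
  then show ?thesis using assms by simp
qed

lemma Gram_Rm: "Gram n d (Rm n d i A) \<beta> = Gram n d A \<beta>"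
proof -
  have "(\<Sum>p\<in>Sb n d i \<beta>. Rm n d i A (fst p) (snd p)) = (\<Sum>q\<in>Sb n d i \<beta>. A (fst q) (snd q))"
  proof (rule sum_Sb_avg)
    fix p assume p: "p \<in> Sb n d i \<beta>"
    then have "fst p \<in> JJ n d i" "snd p \<in> JJ n d i" unfolding Sb_def by auto
    then show "Rm n d i A (fst p) (snd p) = (\<Sum>q\<in>Sb n d i \<beta>. A (fst q) (snd q)) / real (card (Sb n d i \<beta>))"
      unfolding Rm_def using Sb_cls[OF p] by simp
  qed
  moreover have "(\<Sum>p\<in>{p\<in>{..kk n d}\<times>{..kk n d}. map2 (+) (alph n d (fst p)) (alph n d (snd p)) = \<beta>} - Sb n d i \<beta>. Rm n d i A (fst p) (snd p))
      = (\<Sum>p\<in>{p\<in>{..kk n d}\<times>{..kk n d}. map2 (+) (alph n d (fst p)) (alph n d (snd p)) = \<beta>} - Sb n d i \<beta>. A (fst p) (snd p))"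
    by (intro sum.cong refl) (use Rm_outside in \<open>auto simp: Rm_def\<close>)
  ultimately show ?thesis using Gram_decomp[of n d "Rm n d i A" \<beta> i] Gram_decomp[of n d A \<beta> i] by simp
qed

lemma Rm_Fixd: "Fixd n d i (Rm n d i A)"
  unfolding Fixd_def
proof (intro allI impI)
  fix j l assume jl: "j \<in> JJ n d i \<and> l \<in> JJ n d i"
  let ?\<beta> = "map2 (+) (alph n d j) (alph n d l)"
  have "(\<Sum>p\<in>Sb n d i ?\<beta>. Rm n d i A (fst p) (snd p)) = (\<Sum>q\<in>Sb n d i ?\<beta>. A (fst q) (snd q))"
  proof (rule sum_Sb_avg)
    fix p assume p: "p \<in> Sb n d i ?\<beta>"
    then have "fst p \<in> JJ n d i" "snd p \<in> JJ n d i" unfolding Sb_def by auto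
    then show "Rm n d i A (fst p) (snd p) = (\<Sum>q\<in>Sb n d i ?\<beta>. A (fst q) (snd q)) / real (card (Sb n d i ?\<beta>))"
      unfolding Rm_def using Sb_cls[OF p] by simp
  qed
  then show "Rm n d i A j l = (\<Sum>p\<in>cls n d i j l. Rm n d i A (fst p) (snd p)) / real (card (cls n d i j l))"
    using jl unfolding Rm_def cls_def by simp
qed

lemma Rm_Sym: "A \<in> SymMat (kk n d) \<Longrightarrow> Rm n d i A \<in> SymMat (kk n d)"
  unfolding SymMat_def
proof (intro CollectI conjI allI impI)
  fix j l assume A: "A \<in> {A. (\<forall>j l. A j l = A l j) \<and> (\<forall>j l. kk n d < j \<or> kk n d < l \<longrightarrow> A j l = 0)}"
  show "Rm n d i A j l = Rm n d i A l j"
    using A unfolding Rm_def by (auto simp: cls_sym)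
  show "kk n d < j \<or> kk n d < l \<Longrightarrow> Rm n d i A j l = 0"
    using A unfolding Rm_def JJ_def by auto
qed

lemma Fixd_zero:
  assumes F: "Fixd n d i E" and supp: "\<And>j l. E j l \<noteq> 0 \<Longrightarrow> j \<in> JJ n d i \<and> l \<in> JJ n d i"
    and g: "\<And>\<beta>. Gram n d E \<beta> = 0"
  shows "E j l = 0"
proof (cases "j \<in> JJ n d i \<and> l \<in> JJ n d i")
  case True
  let ?\<beta> = "map2 (+) (alph n d j) (alph n d l)"
  have "(\<Sum>p\<in>{p\<in>{..kk n d}\<times>{..kk n d}. map2 (+) (alph n d (fst p)) (alph n d (snd p)) = ?\<beta>} - Sb n d i ?\<beta>. E (fst p) (snd p)) = 0"
  proof (intro sum.neutral ballI)
    fix p assume "p \<in> {p\<in>{..kk n d}\<times>{..kk n d}. map2 (+) (alph n d (fst p)) (alph n d (snd p)) = ?\<beta>} - Sb n d i ?\<beta>"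
    then have "\<not> (fst p \<in> JJ n d i \<and> snd p \<in> JJ n d i)" by (rule Rm_outside)
    then show "E (fst p) (snd p) = 0" using supp by blast
  qed
  then have "(\<Sum>p\<in>Sb n d i ?\<beta>. E (fst p) (snd p)) = 0" using Gram_decomp[of n d E ?\<beta> i] g by simp
  then show ?thesis using F True unfolding Fixd_def cls_def by simp
next
  case False then show ?thesis using supp by blast
qed



lemma qform_pert:
  fixes A :: "nat \<Rightarrow> nat \<Rightarrow> real" and u :: "nat \<Rightarrow> real" and t :: real
  assumes sym: "\<And>j l. A j l = A l j" and j0: "j0 \<le> K"
  shows "qform K A (\<lambda>j. u j + (if j = j0 then t else 0)) =
    qform K A u + 2 * t * (\<Sum>l\<le>K. A j0 l * u l) + t\<^sup>2 * A j0 j0"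
proof -
  let ?e = "\<lambda>j. if j = j0 then t else (0::real)"
  have "qform K A (\<lambda>j. u j + ?e j) = (\<Sum>j\<le>K. \<Sum>l\<le>K. u j * A j l * u l)
     + (\<Sum>j\<le>K. \<Sum>l\<le>K. ?e j * A j l * u l) + (\<Sum>j\<le>K. \<Sum>l\<le>K. u j * A j l * ?e l)
     + (\<Sum>j\<le>K. \<Sum>l\<le>K. ?e j * A j l * ?e l)"
    unfolding qform_def by (simp add: sum.distrib[symmetric] algebra_simps)
  also have "(\<Sum>j\<le>K. \<Sum>l\<le>K. ?e j * A j l * u l) = t * (\<Sum>l\<le>K. A j0 l * u l)"
  proof -
    have "\<And>j. (\<Sum>l\<le>K. ?e j * A j l * u l) = (if j = j0 then t * (\<Sum>l\<le>K. A j0 l * u l) else 0)"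
      by (simp add: sum_distrib_left mult_ac)
    then show ?thesis using j0 by (simp add: sum.delta)
  qed
  also have "(\<Sum>j\<le>K. \<Sum>l\<le>K. u j * A j l * ?e l) = t * (\<Sum>l\<le>K. A j0 l * u l)"
  proof -
    have "(\<Sum>j\<le>K. \<Sum>l\<le>K. u j * A j l * ?e l) = (\<Sum>j\<le>K. u j * A j j0 * t)"
      using j0 by (intro sum.cong refl) (simp add: if_distrib[of "\<lambda>x. _ * x"] sum.delta cong: if_cong)
    also have "\<dots> = t * (\<Sum>l\<le>K. A j0 l * u l)"
      by (simp add: sum_distrib_left sym[of _ j0] mult_ac)
    finally show ?thesis .
  qed
  also have "(\<Sum>j\<le>K. \<Sum>l\<le>K. ?e j * A j l * ?e l) = t\<^sup>2 * A j0 j0"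
  proof -
    have "\<And>j. (\<Sum>l\<le>K. ?e j * A j l * ?e l) = (if j = j0 then t\<^sup>2 * A j0 j0 else 0)"
      using j0 by (case_tac "j = j0") (simp_all add: if_distrib[of "\<lambda>x. _ * x"] sum.delta power2_eq_square mult_ac cong: if_cong)
    then show ?thesis using j0 by (simp add: sum.delta)
  qed
  finally show ?thesis unfolding qform_def by simp
qed

lemma quad_zero:
  fixes a b :: real
  assumes "\<And>t. 0 \<le> 2 * t * a + t\<^sup>2 * b"
  shows "a = 0"
proof (rule ccontr)
  assume a: "a \<noteq> 0"
  define c where "c = \<bar>b\<bar> + 1"
  have c: "c > 0" "b < 2 * c" unfolding c_def by auto
  have "0 \<le> 2 * (- a / c) * a + (- a / c)\<^sup>2 * b" by (rule assms)
  also have "\<dots> = a\<^sup>2 * (b - 2 * c) / c\<^sup>2"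
    using c by (simp add: field_simps power2_eq_square)
  also have "\<dots> < 0"
    using a c by (intro divide_neg_pos mult_pos_neg) auto
  finally show False by simp
qed

lemma qform_gram_real:
  "qform (kk n d) A (\<lambda>j. mj n d j x) =
    (\<Sum>\<beta>\<in>Iexp (Suc n) (2*d). Gram n d A \<beta> * monom_eval \<beta> (x :: nat \<Rightarrow> real))"
  using qform_gram[of n d A x] by simp

lemma key:
  assumes E: "E \<in> SymMat (kk n d)" and g: "\<And>\<beta>. Gram n d E \<beta> = 0"
    and psd: "\<And>z (x::nat \<Rightarrow> real). (\<forall>j\<le>n+i. z j = mj n d j x) \<Longrightarrow> qform (kk n d) E z \<ge> 0"
    and F: "Fixd n d i E"
  shows "E j l = 0"
proof -
  let ?K = "kk n d"
  have sym: "\<And>j l. E j l = E l j" and out: "\<And>j l. ?K < j \<or> ?K < l \<Longrightarrow> E j l = 0"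
    using E unfolding SymMat_def by auto
  have q0: "qform ?K E (\<lambda>j. mj n d j x) = 0" for x :: "nat \<Rightarrow> real"
    unfolding qform_gram_real g by simp
  have row0: "E j0 l = 0" if j0: "n + i < j0" "j0 \<le> ?K" for j0 l
  proof (cases "l \<le> ?K")
    case False then show ?thesis using out by auto
  next
    case True
    have lin: "(\<Sum>l\<le>?K. E j0 l * mj n d l x) = 0" for x :: "nat \<Rightarrow> real"
    proof (rule quad_zero)
      fix t :: real
      have "0 \<le> qform ?K E (\<lambda>j. mj n d j x + (if j = j0 then t else 0))"
        using j0 by (intro psd[of _ x]) auto
      also have "\<dots> = 2 * t * (\<Sum>l\<le>?K. E j0 l * mj n d l x) + t\<^sup>2 * E j0 j0"
        using qform_pert[OF sym j0(2)] q0 by simp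
      finally show "0 \<le> 2 * t * (\<Sum>l\<le>?K. E j0 l * mj n d l x) + t\<^sup>2 * E j0 j0" .
    qed
    show ?thesis using monomials_indep[of "\<lambda>l. E j0 l" n d l] lin True by blast
  qed
  have supp: "j \<in> JJ n d i \<and> l \<in> JJ n d i" if "E j l \<noteq> 0" for j l
  proof -
    have "j \<le> ?K" "l \<le> ?K" using out that by (auto simp: not_less[symmetric])
    moreover have "j \<le> n + i" by (rule ccontr) (use row0[of j l] that \<open>j \<le> ?K\<close> in auto)
    moreover have "l \<le> n + i" by (rule ccontr) (use row0[of l j] that \<open>l \<le> ?K\<close> sym[of j l] in auto)
    ultimately show ?thesis unfolding JJ_def by simp
  qed
  show ?thesis by (rule Fixd_zero[OF F supp g])
qed



lemma subseq_conv:
  fixes X :: "nat \<Rightarrow> 'b \<Rightarrow> real"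
  assumes "finite S" "\<And>t p. p \<in> S \<Longrightarrow> \<bar>X t p\<bar> \<le> B"
  shows "\<exists>r. strict_mono r \<and> (\<forall>p\<in>S. convergent (\<lambda>t. X (r t) p))"
  using assms
proof (induction S rule: finite_induct)
  case empty
  show ?case by (rule exI[of _ id]) (simp add: strict_mono_def)
next
  case (insert p S)
  then obtain r where r: "strict_mono r" "\<forall>q\<in>S. convergent (\<lambda>t. X (r t) q)" by auto
  have "bounded (range (\<lambda>t. X (r t) p))"
    unfolding bounded_real using insert.prems by auto
  then obtain l r2 where r2: "strict_mono r2" "((\<lambda>t. X (r t) p) \<circ> r2) \<longlonglongrightarrow> l"
    using bounded_imp_convergent_subsequence by blast
  have "strict_mono (r \<circ> r2)" using r r2 strict_mono_o by blast
  moreover have "convergent (\<lambda>t. X ((r \<circ> r2) t) p)"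
    using r2 by (auto simp: convergent_def o_def)
  moreover have "convergent (\<lambda>t. X ((r \<circ> r2) t) q)" if "q \<in> S" for q
    using convergent_subseq_convergent[OF r(2)[rule_format, OF that] r2(1)] by (simp add: o_def)
  ultimately show ?case by blast
qed

lemma mat_limit:
  fixes G :: "nat \<Rightarrow> nat \<Rightarrow> nat \<Rightarrow> real"
  assumes G: "\<And>t. G t \<in> SymMat K" and bd: "\<And>t j l. \<bar>G t j l\<bar> \<le> B"
  shows "\<exists>r G'. strict_mono r \<and> G' \<in> SymMat K \<and> (\<forall>j l. (\<lambda>t. G (r t) j l) \<longlonglongrightarrow> G' j l)"
proof -
  obtain r where r: "strict_mono r" "\<forall>p\<in>{..K}\<times>{..K}. convergent (\<lambda>t. G (r t) (fst p) (snd p))"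
    using subseq_conv[of "{..K}\<times>{..K}" "\<lambda>t p. G t (fst p) (snd p)" B] bd by auto
  define G' where "G' j l = (if j \<le> K \<and> l \<le> K then lim (\<lambda>t. G (r t) j l) else 0)" for j l
  have sym: "G t j l = G t l j" and out: "K < j \<or> K < l \<Longrightarrow> G t j l = 0" for t j l
    using G[of t] unfolding SymMat_def by auto
  have conv: "(\<lambda>t. G (r t) j l) \<longlonglongrightarrow> G' j l" for j l
  proof (cases "j \<le> K \<and> l \<le> K")
    case True
    then show ?thesis using r(2) unfolding G'_def convergent_LIMSEQ_iff by force
  next
    case False
    then show ?thesis unfolding G'_def using out by auto
  qed
  have "G' \<in> SymMat K"
    unfolding SymMat_def G'_def using sym by auto
  then show ?thesis using r(1) conv by blast
qed

lemma Gram_lim: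
  assumes "\<And>j l. (\<lambda>t. G t j l) \<longlonglongrightarrow> G' j l"
  shows "(\<lambda>t. Gram n d (G t) \<beta>) \<longlonglongrightarrow> Gram n d G' \<beta>"
  unfolding Gram_def by (intro tendsto_sum) (simp add: assms)

lemma qform_lim:
  assumes "\<And>j l. (\<lambda>t. G t j l) \<longlonglongrightarrow> G' j l"
  shows "(\<lambda>t. qform K (G t) z) \<longlonglongrightarrow> qform K G' (z :: nat \<Rightarrow> real)"
  unfolding qform_def by (intro tendsto_sum tendsto_mult tendsto_const assms)

lemma Fixd_lim:
  assumes "\<And>j l. (\<lambda>t. G t j l) \<longlonglongrightarrow> G' j l" "\<And>t. Fixd n d i (G t)"
  shows "Fixd n d i G'"
  unfolding Fixd_def
proof (intro allI impI)
  fix j l assume jl: "j \<in> JJ n d i \<and> l \<in> JJ n d i"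
  have cpos: "card (cls n d i j l) > 0"
    using cls_mem[of j n d i l] jl Sb_finite[of n d i] unfolding cls_def by (metis card_gt_0_iff empty_iff)
  have "(\<lambda>t. (\<Sum>p\<in>cls n d i j l. G t (fst p) (snd p)) / real (card (cls n d i j l)))
      \<longlonglongrightarrow> (\<Sum>p\<in>cls n d i j l. G' (fst p) (snd p)) / real (card (cls n d i j l))"
    by (intro tendsto_divide tendsto_sum tendsto_const assms(1)) (use cpos in simp)
  moreover have "(\<lambda>t. (\<Sum>p\<in>cls n d i j l. G t (fst p) (snd p)) / real (card (cls n d i j l)))
      = (\<lambda>t. G t j l)" using assms(2) jl unfolding Fixd_def by metis
  ultimately show "G' j l = (\<Sum>p\<in>cls n d i j l. G' (fst p) (snd p)) / real (card (cls n d i j l))"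
    using assms(1) LIMSEQ_unique by metis
qed

lemma Gram_diff: "Gram n d (\<lambda>j l. X j l - Y j l) \<beta> = Gram n d X \<beta> - Gram n d Y \<beta>"
  unfolding Gram_def by (simp add: sum_subtractf[symmetric] if_distrib cong: if_cong)

lemma qform_diff: "qform K (\<lambda>j l. X j l - Y j l) z = qform K X z - qform K Y (z :: nat \<Rightarrow> real)"
  unfolding qform_def by (simp add: sum_subtractf[symmetric] algebra_simps)

lemma Gram_scale: "Gram n d (\<lambda>j l. X j l / c) \<beta> = Gram n d X \<beta> / c"
  unfolding Gram_def sum_divide_distrib by (intro sum.cong refl) simp

lemma qform_scale: "qform K (\<lambda>j l. X j l / c) z = qform K X z / (c :: real)"
  unfolding qform_def by (simp add: sum_divide_distrib)

lemma Gram_Forms: "Gram n d A \<in> Forms n (2 * d)"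
  unfolding Forms_def
proof (intro CollectI allI impI)
  fix \<beta> assume nb: "\<beta> \<notin> Iexp (Suc n) (2 * d)"
  have "map2 (+) (alph n d j) (alph n d l) \<noteq> \<beta>" if "j \<le> kk n d" "l \<le> kk n d" for j l
    using map2_Iexp[OF alph_props(1)[OF that(1)] alph_props(1)[OF that(2)]] nb by (auto simp: mult_2)
  then show "Gram n d A \<beta> = 0" unfolding Gram_def by (intro sum.neutral ballI) auto
qed

lemma qform_zero_vec: "\<not> nonzero_vec K z \<Longrightarrow> qform K A z = (0::real)"
  unfolding nonzero_vec_def qform_def by auto



theorem theorem2p1:
  fixes n d i :: nat
  assumes "1 \<le> n" and "1 \<le> d" and "i \<le> kk n d - n"
  shows "closed (Ccone n d i)"
  unfolding closed_sequential_limits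
proof (intro allI impI, elim conjE)
  let ?K = "kk n d"
  fix Fs :: "nat \<Rightarrow> nat list \<Rightarrow> real" and f
  assume mem: "\<forall>t. Fs t \<in> Ccone n d i" and lim: "Fs \<longlonglongrightarrow> f"
  have pw: "(\<lambda>t. Fs t \<beta>) \<longlonglongrightarrow> f \<beta>" for \<beta>
    using continuous_on_tendsto_compose[OF continuous_on_product_coordinates lim] by simp
  have "\<forall>t. \<exists>A. A \<in> SymMat ?K \<and> Gram n d A = Fs t \<and> (\<forall>z\<in>Vreal n d i. qform ?K A z \<ge> 0)"
    using mem unfolding Ccone_def by blast
  then have "\<exists>A. \<forall>t. A t \<in> SymMat ?K \<and> Gram n d (A t) = Fs t \<and> (\<forall>z\<in>Vreal n d i. qform ?K (A t) z \<ge> 0)"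
    by (rule choice)
  then obtain A where A: "\<And>t. A t \<in> SymMat ?K" "\<And>t. Gram n d (A t) = Fs t"
      "\<And>t z. z \<in> Vreal n d i \<Longrightarrow> qform ?K (A t) z \<ge> 0"
    by blast
  define B where "B t = Rm n d i (A t)" for t
  have BS: "B t \<in> SymMat ?K" for t unfolding B_def by (rule Rm_Sym[OF A(1)])
  have BG: "Gram n d (B t) \<beta> = Fs t \<beta>" for t \<beta> unfolding B_def Gram_Rm A(2) ..
  have BF: "Fixd n d i (B t)" for t unfolding B_def by (rule Rm_Fixd)
  have BW: "qform ?K (B t) z \<ge> 0" if z: "z \<in> Vreal n d i" for t z
  proof -
    have "qform ?K (\<lambda>j l. B t j l - A t j l) z = 0"
    proof (rule zariski_vanish[OF _ _ z])
      fix j l assume "B t j l - A t j l \<noteq> 0"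
      then show "j \<le> n + i \<and> l \<le> n + i" unfolding B_def Rm_def JJ_def by (auto split: if_splits)
    next
      fix \<beta> show "Gram n d (\<lambda>j l. B t j l - A t j l) \<beta> = 0"
        unfolding Gram_diff BG A(2) by simp
    qed
    then show ?thesis using A(3)[OF z, of t] unfolding qform_diff by simp
  qed
  have BP: "qform ?K (B t) z \<ge> 0" if "\<forall>j\<le>n+i. z j = mj n d j x" for t z and x :: "nat \<Rightarrow> real"
  proof (cases "nonzero_vec ?K z")
    case True then show ?thesis using BW P_in_W that by blast
  next
    case False then show ?thesis using qform_zero_vec by simp
  qed
  define Nm where "Nm M = (\<Sum>p\<in>{..?K}\<times>{..?K}. \<bar>M (fst p) (snd p)\<bar>)" for M :: "nat \<Rightarrow> nat \<Rightarrow> real"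
  have Nm_ge: "\<bar>M j l\<bar> \<le> Nm M" if "M \<in> SymMat ?K" for M j l
  proof (cases "j \<le> ?K \<and> l \<le> ?K")
    case True
    then show ?thesis unfolding Nm_def
      using member_le_sum[of "(j, l)" "{..?K}\<times>{..?K}" "\<lambda>p. \<bar>M (fst p) (snd p)\<bar>"] by auto
  next
    case False
    then have "M j l = 0" using that unfolding SymMat_def by auto
    then show ?thesis unfolding Nm_def by (simp add: sum_nonneg)
  qed
  have Nm_lim: "(\<lambda>t. Nm (G t)) \<longlonglongrightarrow> Nm G'" if "\<And>j l. (\<lambda>t. G t j l) \<longlonglongrightarrow> G' j l" for G G'
    unfolding Nm_def by (intro tendsto_sum tendsto_rabs that)
  show "f \<in> Ccone n d i"
  proof (cases "\<exists>M. \<forall>t. Nm (B t) \<le> M")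
    case True
    then obtain M where M: "\<And>t. Nm (B t) \<le> M" by blast
    obtain r B' where r: "strict_mono r" "B' \<in> SymMat ?K" "\<And>j l. (\<lambda>t. B (r t) j l) \<longlonglongrightarrow> B' j l"
    proof -
      have "\<And>t j l. \<bar>B t j l\<bar> \<le> M" using Nm_ge[OF BS] M order_trans by blast
      then show ?thesis using mat_limit[where G = B and B = M and K = ?K] BS that by blast
    qed
    have "Gram n d B' \<beta> = f \<beta>" for \<beta>
    proof -
      have "(\<lambda>t. Gram n d (B (r t)) \<beta>) \<longlonglongrightarrow> Gram n d B' \<beta>" by (rule Gram_lim) (rule r(3))
      moreover have "(\<lambda>t. Gram n d (B (r t)) \<beta>) \<longlonglongrightarrow> f \<beta>"
        unfolding BG using LIMSEQ_subseq_LIMSEQ[OF pw r(1)] by (simp add: o_def)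
      ultimately show ?thesis using LIMSEQ_unique by blast
    qed
    then have fG: "Gram n d B' = f" by auto
    have "qform ?K B' z \<ge> 0" if "z \<in> Vreal n d i" for z
    proof -
      have "(\<lambda>t. qform ?K (B (r t)) z) \<longlonglongrightarrow> qform ?K B' z" by (rule qform_lim) (rule r(3))
      then show ?thesis using BW[OF that] by (intro LIMSEQ_le_const) auto
    qed
    then show ?thesis unfolding Ccone_def using fG Gram_Forms[of n d B'] r(2) by blast
  next
    case False
    have "\<forall>m::nat. \<exists>t. Nm (B t) > real m"
    proof
      fix m :: nat
      have "\<not> (\<forall>t. Nm (B t) \<le> real m)" using False by blast
      then show "\<exists>t. Nm (B t) > real m" by (simp add: not_le)
    qed
    then have "\<exists>s. \<forall>m::nat. Nm (B (s m)) > real m" by (rule choice)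
    then obtain s where s: "\<And>m. Nm (B (s m)) > real m" by blast
    define E where "E m = (\<lambda>j l. B (s m) j l / Nm (B (s m)))" for m
    have Npos: "Nm (B (s m)) > 0" for m using s[of m] by linarith
    have ES: "E m \<in> SymMat ?K" for m
    proof -
      have s1: "\<And>j l. B (s m) j l = B (s m) l j" and s2: "\<And>j l. ?K < j \<or> ?K < l \<Longrightarrow> B (s m) j l = 0"
        using BS[of "s m"] unfolding SymMat_def by blast+
      show ?thesis unfolding SymMat_def E_def
      proof (intro CollectI conjI allI impI)
        fix j l
        show "B (s m) j l / Nm (B (s m)) = B (s m) l j / Nm (B (s m))" using s1[of j l] by simp
        show "?K < j \<or> ?K < l \<Longrightarrow> B (s m) j l / Nm (B (s m)) = 0" using s2[of j l] by simp
      qed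
    qed
    have Ebd: "\<bar>E m j l\<bar> \<le> 1" for m j l
      using Nm_ge[OF BS, of "s m" j l] Npos[of m] unfolding E_def by (simp add: abs_divide divide_le_eq)
    obtain r E' where r: "strict_mono r" "E' \<in> SymMat ?K" "\<And>j l. (\<lambda>t. E (r t) j l) \<longlonglongrightarrow> E' j l"
      using mat_limit[where G = E and B = 1 and K = ?K, OF ES Ebd] by blast
    have NE: "Nm (E m) = 1" for m
    proof -
      have ab: "\<And>p. \<bar>E m (fst p) (snd p)\<bar> = \<bar>B (s m) (fst p) (snd p)\<bar> / Nm (B (s m))"
        using Npos[of m] unfolding E_def by (simp add: abs_divide)
      have "Nm (E m) = Nm (B (s m)) / Nm (B (s m))"
        unfolding Nm_def[of "E m"] Nm_def[of "B (s m)"] sum_divide_distrib ab ..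
      then show ?thesis using Npos[of m] by simp
    qed
    have "(\<lambda>t. Nm (E (r t))) \<longlonglongrightarrow> Nm E'" using Nm_lim[of "\<lambda>t. E (r t)" E'] r(3) by simp
    then have "(\<lambda>t. 1) \<longlonglongrightarrow> Nm E'" unfolding NE .
    from LIMSEQ_unique[OF tendsto_const this] have NE': "Nm E' = 1" by simp
    have gE': "Gram n d E' \<beta> = 0" for \<beta>
    proof -
      obtain C where C: "C > 0" "\<And>t. norm (Fs t \<beta>) \<le> C"
      proof -
        have "Bseq (\<lambda>t. Fs t \<beta>)" by (rule convergent_imp_Bseq[OF convergentI[OF pw]])
        then obtain C0 where "0 < C0" "\<forall>t. norm (Fs t \<beta>) \<le> C0" by (rule BseqE)
        then show ?thesis using that by blast
      qed
      have "(\<lambda>m. Gram n d (E m) \<beta>) \<longlonglongrightarrow> 0"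
      proof (rule Lim_null_comparison)
        show "(\<lambda>m. C / real m) \<longlonglongrightarrow> 0" by (rule lim_const_over_n)
        show "\<forall>\<^sub>F m in sequentially. norm (Gram n d (E m) \<beta>) \<le> C / real m"
        proof (rule eventually_sequentiallyI[of 1])
          fix m :: nat assume m: "1 \<le> m"
          have "norm (Gram n d (E m) \<beta>) = \<bar>Fs (s m) \<beta>\<bar> / Nm (B (s m))"
            unfolding E_def Gram_scale BG using Npos[of m] by (simp add: abs_divide)
          also have "\<dots> \<le> C / real m"
            using C(2)[of "s m"] s[of m] m by (intro frac_le) auto
          finally show "norm (Gram n d (E m) \<beta>) \<le> C / real m" .
        qed
      qed
      then have "(\<lambda>t. Gram n d (E (r t)) \<beta>) \<longlonglongrightarrow> 0"
        using LIMSEQ_subseq_LIMSEQ[OF _ r(1)] by (simp add: o_def)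
      moreover have "(\<lambda>t. Gram n d (E (r t)) \<beta>) \<longlonglongrightarrow> Gram n d E' \<beta>" by (rule Gram_lim) (rule r(3))
      ultimately show ?thesis using LIMSEQ_unique by blast
    qed
    have pE': "qform ?K E' z \<ge> 0" if "\<forall>j\<le>n+i. z j = mj n d j x" for z and x :: "nat \<Rightarrow> real"
    proof (rule LIMSEQ_le_const)
      show "(\<lambda>t. qform ?K (E (r t)) z) \<longlonglongrightarrow> qform ?K E' z" by (rule qform_lim) (rule r(3))
      show "\<exists>N. \<forall>t\<ge>N. 0 \<le> qform ?K (E (r t)) z"
        unfolding E_def qform_scale using BP[OF that] Npos by (auto intro: divide_nonneg_pos)
    qed
    have FE: "Fixd n d i (E m)" for m
      using BF[of "s m"] unfolding Fixd_def E_def by (simp add: sum_divide_distrib[symmetric])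
    have FE': "Fixd n d i E'" by (rule Fixd_lim[where G = "\<lambda>t. E (r t)"]) (rule r(3), rule FE)
    have "E' j l = 0" for j l by (rule key[OF r(2) gE' pE' FE'])
    then have "Nm E' = 0" unfolding Nm_def by simp
    then show ?thesis using NE' by simp
  qed
qed

end
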